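(* Let $n>1$, $\lambda\in(0,1)$, and let $X_1,\ldots,X_n$ be a time-homogeneous Markov chain on $\{0,1\}$ with transition matrix $K=\begin{pmatrix}1-\lambda&\lambda\\ \lambda&1-\lambda\end{pmatrix}$ and $X_1\sim\pi=(1/2,1/2)$. Let $f$ satisfy $|f(x_1,\ldots,x_i,\ldots,x_n)-f(x_1,\ldots,\hat x,\ldots,x_n)|\le 1/n$ for all $x^n,\hat x$ and $1\le i\le n$. Then for every $\alpha>1$ (with $\beta=\alpha/(\alpha-1)$) and $t>0$, $$\mathbb{P}\left(\left|f-\mathcal{P}_{\bigotimes_{i=1}^n X_i}(f)\right|\ge t\right)\le 2^{1/\beta}\exp\left(-\frac{2nt^2}{\beta}+\frac{n-1}{\beta}\ln\left(2\left((1-\lambda)^\alpha+\lambda^\alpha\right)^{\frac{1}{\alpha-1}}\right)\right).$$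
   Context: $\mathcal{P}_{\bigotimes_{i=1}^n X_i}$ is the product of the marginal laws of $X_1,\ldots,X_n$ (here $\pi^{\otimes n}$), and $\mu(g)=\int g\,d\mu$. *)

theory Defs
  imports Complex_Main
begin

definition cube :: "nat \<Rightarrow> nat list set" where
  "cube n = {xs. length xs = n \<and> set xs \<subseteq> {0,1}}"

definition Kmat :: "real \<Rightarrow> nat \<Rightarrow> nat \<Rightarrow> real" where
  "Kmat lam a b = (if a = b then 1 - lam else lam)"

definition chain_pmf :: "real \<Rightarrow> nat list \<Rightarrow> real" where
  "chain_pmf lam xs = (1/2) * (\<Prod>i<length xs - 1. Kmat lam (xs ! i) (xs ! Suc i))"

definition chain_prob :: "real \<Rightarrow> nat \<Rightarrow> (nat list \<Rightarrow> bool) \<Rightarrow> real" where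
  "chain_prob lam n E = (\<Sum>xs\<in>{xs\<in>cube n. E xs}. chain_pmf lam xs)"

text \<open>Expectation of g under the product of the marginals, pi^{\<otimes>n} (uniform on {0,1}^n).\<close>
definition prod_mean :: "nat \<Rightarrow> (nat list \<Rightarrow> real) \<Rightarrow> real" where
  "prod_mean n g = (\<Sum>xs\<in>cube n. (1/2)^n * g xs)"

end

theory Submission
  imports Defs "HOL-Probability.Hoeffding"
begin

lemma cosh_le_aux:
  fixes x :: real assumes "x \<ge> 0" shows "cosh x \<le> exp (x^2/2)"
proof -
  have h: "- (2*x) * (1/2) + ln (1 + (1/2) * (exp (2*x) - 1)) \<le> (2*x)^2/8"
    using Hoeffdings_lemma_aux[of "2*x" "1/2"] assms by simp
  have e: "1 + (1/2) * (exp (2*x) - 1) = exp x * cosh x"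
    by (simp add: cosh_def exp_minus field_simps flip: exp_add)
  have cp: "cosh x > 0" by (simp add: cosh_def add_pos_pos)
  have "ln (exp x * cosh x) = x + ln (cosh x)" using cp by (simp add: ln_mult)
  with h e have "ln (cosh x) \<le> x^2/2" by (simp add: power2_eq_square)
  then show ?thesis using cp by (metis exp_le_cancel_iff exp_ln)
qed

lemma cosh_le_exp_sq:
  fixes x :: real shows "cosh x \<le> exp (x^2/2)"
proof (cases "x \<ge> 0")
  case True then show ?thesis by (rule cosh_le_aux)
next
  case False then show ?thesis using cosh_le_aux[of "-x"] by simp
qed

lemma finite_cube: "finite (cube n)"
  unfolding cube_def using finite_lists_length_eq[of "{0::nat,1}" n]
  by (simp add: conj_commute)

lemma cube_0: "cube 0 = {[]}" by (auto simp: cube_def)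

lemma cube_Suc: "cube (Suc n) = (\<lambda>xs. 0#xs) ` cube n \<union> (\<lambda>xs. 1#xs) ` cube n"
proof
  show "cube (Suc n) \<subseteq> (\<lambda>xs. 0#xs) ` cube n \<union> (\<lambda>xs. 1#xs) ` cube n"
  proof
    fix xs assume "xs \<in> cube (Suc n)"
    then obtain y ys where "xs = y#ys" "y \<in> {0,1}" "ys \<in> cube n"
      unfolding cube_def by (cases xs) auto
    then show "xs \<in> (\<lambda>xs. 0#xs) ` cube n \<union> (\<lambda>xs. 1#xs) ` cube n" by auto
  qed
qed (auto simp: cube_def)

lemma sum_cube_Suc: "sum h (cube (Suc n)) = sum (\<lambda>xs. h (0#xs) + h (1#xs)) (cube n)"
proof -
  have "sum h (cube (Suc n)) = sum h ((\<lambda>xs. 0#xs) ` cube n) + sum h ((\<lambda>xs. 1#xs) ` cube n)"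
    unfolding cube_Suc by (rule sum.union_disjoint) (auto simp: finite_cube)
  also have "\<dots> = sum (\<lambda>xs. h (0#xs)) (cube n) + sum (\<lambda>xs. h (1#xs)) (cube n)"
    by (subst (1 2) sum.reindex) (auto simp: inj_on_def)
  finally show ?thesis by (simp add: sum.distrib)
qed

lemma pm_Suc: "prod_mean (Suc n) h = prod_mean n (\<lambda>xs. (h (0#xs) + h (1#xs)) / 2)"
  unfolding prod_mean_def sum_cube_Suc by (intro sum.cong) (auto simp: field_simps)

lemma pm_mono: "(\<And>xs. xs \<in> cube n \<Longrightarrow> g xs \<le> h xs) \<Longrightarrow> prod_mean n g \<le> prod_mean n h"
  unfolding prod_mean_def by (intro sum_mono mult_left_mono) auto

lemma pm_cmult: "prod_mean n (\<lambda>xs. K * h xs) = K * prod_mean n h"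
  unfolding prod_mean_def by (simp add: sum_distrib_left mult.left_commute)

lemma pm_uminus: "prod_mean n (\<lambda>xs. - h xs) = - prod_mean n h"
  unfolding prod_mean_def by (simp add: sum_negf)

definition bd :: "nat \<Rightarrow> real \<Rightarrow> (nat list \<Rightarrow> real) \<Rightarrow> bool" where
  "bd n c f \<longleftrightarrow> (\<forall>xs\<in>cube n. \<forall>i<n. \<forall>y\<in>{0,1}. \<bar>f xs - f (xs[i := y])\<bar> \<le> c)"

lemma mgf: "bd n c f \<Longrightarrow>
  prod_mean n (\<lambda>xs. exp (s * (f xs - prod_mean n f))) \<le> exp (s^2 * real n * c^2 / 8)"
proof (induction n arbitrary: f)
  case 0 then show ?case by (simp add: prod_mean_def cube_0)
next
  case (Suc n)
  define g where "g = (\<lambda>xs. (f (0#xs) + f (1#xs)) / 2)"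
  define m where "m = prod_mean n g"
  have mf: "prod_mean (Suc n) f = m" by (simp add: pm_Suc m_def g_def)
  have bg: "bd n c g" unfolding bd_def
  proof (intro ballI allI impI)
    fix xs i y assume xs: "xs \<in> cube n" and i: "i < n" and y: "y \<in> {0::nat,1}"
    have c0: "0#xs \<in> cube (Suc n)" "1#xs \<in> cube (Suc n)" using xs by (auto simp: cube_def)
    have "\<bar>f (0#xs) - f ((0#xs)[Suc i := y])\<bar> \<le> c"
      using Suc.prems c0 i y unfolding bd_def by blast
    moreover have "\<bar>f (1#xs) - f ((1#xs)[Suc i := y])\<bar> \<le> c"
      using Suc.prems c0 i y unfolding bd_def by blast
    ultimately show "\<bar>g xs - g (xs[i := y])\<bar> \<le> c"
      unfolding g_def by (simp add: abs_le_iff field_simps)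
  qed
  have IH: "prod_mean n (\<lambda>xs. exp (s * (g xs - m))) \<le> exp (s^2 * real n * c^2 / 8)"
    using Suc.IH[OF bg] by (simp add: m_def)
  have pt: "(exp (s * (f (0#xs) - m)) + exp (s * (f (1#xs) - m))) / 2
        \<le> exp (s^2 * c^2 / 8) * exp (s * (g xs - m))" if xs: "xs \<in> cube n" for xs
  proof -
    define d where "d = (f (0#xs) - f (1#xs)) / 2"
    have c0: "0#xs \<in> cube (Suc n)" using xs by (auto simp: cube_def)
    have "\<bar>f (0#xs) - f ((0#xs)[0 := 1])\<bar> \<le> c"
      using Suc.prems c0 unfolding bd_def by blast
    then have dc: "\<bar>d\<bar> \<le> c/2" by (simp add: d_def)
    have "\<bar>s*d\<bar> \<le> \<bar>s*c/2\<bar>"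
    proof -
      have "\<bar>s\<bar> * (\<bar>d\<bar>*2) \<le> \<bar>s\<bar> * c" using dc by (intro mult_left_mono) auto
      moreover have "c \<ge> 0" using dc by linarith
      ultimately show ?thesis by (simp add: abs_mult)
    qed
    then have "(s*d)^2 \<le> (s*c/2)^2"
      by (metis abs_le_square_iff)
    then have "(s*d)^2/2 \<le> s^2 * c^2 / 8" by (simp add: power_mult_distrib power_divide mult_ac)
    then have cb: "cosh (s*d) \<le> exp (s^2 * c^2 / 8)"
      using cosh_le_exp_sq[of "s*d"] by (meson exp_le_cancel_iff order_trans)
    have "(exp (s * (f (0#xs) - m)) + exp (s * (f (1#xs) - m))) / 2
        = exp (s * (g xs - m)) * cosh (s*d)"
    proof -
      have e1: "s * (g xs - m) + s*d = s * (f (0#xs) - m)" unfolding g_def d_def by (simp add: field_simps)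
      have e2: "s * (g xs - m) + - (s*d) = s * (f (1#xs) - m)" unfolding g_def d_def by (simp add: field_simps)
      have "exp (s * (g xs - m)) * cosh (s*d) = (exp (s * (g xs - m) + s*d) + exp (s * (g xs - m) + - (s*d))) / 2"
        unfolding cosh_def exp_add by (simp add: field_simps)
      then show ?thesis using e1 e2 by simp
    qed
    also have "\<dots> \<le> exp (s * (g xs - m)) * exp (s^2 * c^2 / 8)"
      using cb by (intro mult_left_mono) auto
    finally show ?thesis by (simp add: mult.commute)
  qed
  have "prod_mean (Suc n) (\<lambda>xs. exp (s * (f xs - prod_mean (Suc n) f)))
      = prod_mean n (\<lambda>xs. (exp (s * (f (0#xs) - m)) + exp (s * (f (1#xs) - m))) / 2)"
    unfolding mf by (simp add: pm_Suc)
  also have "\<dots> \<le> prod_mean n (\<lambda>xs. exp (s^2 * c^2 / 8) * exp (s * (g xs - m)))"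
    by (rule pm_mono) (rule pt)
  also have "\<dots> = exp (s^2 * c^2 / 8) * prod_mean n (\<lambda>xs. exp (s * (g xs - m)))"
    by (rule pm_cmult)
  also have "\<dots> \<le> exp (s^2 * c^2 / 8) * exp (s^2 * real n * c^2 / 8)"
    using IH by (intro mult_left_mono) auto
  also have "\<dots> = exp (s^2 * real (Suc n) * c^2 / 8)"
    by (simp add: field_simps flip: exp_add)
  finally show ?case .
qed

lemma chernoff:
  assumes "bd n c f" "c > 0" "n > 0" "t > 0"
  shows "(\<Sum>xs\<in>{xs\<in>cube n. t \<le> f xs - prod_mean n f}. (1/2::real)^n) \<le> exp (- 2 * t^2 / (real n * c^2))"
proof -
  define m where "m = prod_mean n f"
  define s where "s = 4 * t / (real n * c^2)"
  have s0: "s > 0" using assms by (simp add: s_def)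
  have "(\<Sum>xs\<in>{xs\<in>cube n. t \<le> f xs - m}. (1/2::real)^n)
      \<le> (\<Sum>xs\<in>{xs\<in>cube n. t \<le> f xs - m}. (1/2)^n * exp (s * (f xs - m) - s * t))"
  proof (intro sum_mono)
    fix xs assume "xs \<in> {xs\<in>cube n. t \<le> f xs - m}"
    then have "s * t \<le> s * (f xs - m)" using s0 by (intro mult_left_mono) auto
    then have "1 \<le> exp (s * (f xs - m) - s * t)" by simp
    then show "(1/2::real)^n \<le> (1/2)^n * exp (s * (f xs - m) - s * t)" by simp
  qed
  also have "\<dots> \<le> (\<Sum>xs\<in>cube n. (1/2)^n * exp (s * (f xs - m) - s * t))"
    by (intro sum_mono2) (auto simp: finite_cube)
  also have "\<dots> = exp (- s * t) * prod_mean n (\<lambda>xs. exp (s * (f xs - m)))"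
    unfolding prod_mean_def sum_distrib_left
    by (intro sum.cong) (auto simp: exp_diff exp_minus exp_add field_simps)
  also have "\<dots> \<le> exp (- s * t) * exp (s^2 * real n * c^2 / 8)"
    using mgf[OF assms(1), of s] unfolding m_def by (intro mult_left_mono) auto
  also have "\<dots> = exp (- s * t + s^2 * real n * c^2 / 8)"
    by (simp only: exp_add)
  also have "- s * t + s^2 * real n * c^2 / 8 = - 2 * t^2 / (real n * c^2)"
    using assms by (simp add: s_def power2_eq_square divide_simps)
  finally show ?thesis by (simp add: m_def)
qed

lemma two_sided:
  assumes "bd n c f" "c > 0" "n > 0" "t > 0"
  shows "(\<Sum>xs\<in>{xs\<in>cube n. t \<le> \<bar>f xs - prod_mean n f\<bar>}. (1/2::real)^n) \<le> 2 * exp (- 2 * t^2 / (real n * c^2))"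
proof -
  have bm: "bd n c (\<lambda>xs. - f xs)" unfolding bd_def
  proof (intro ballI allI impI)
    fix xs i y assume "xs \<in> cube n" "i < n" "y \<in> {0::nat,1}"
    then have "\<bar>f xs - f (xs[i := y])\<bar> \<le> c" using assms(1) unfolding bd_def by blast
    then show "\<bar>- f xs - - f (xs[i := y])\<bar> \<le> c" by linarith
  qed
  have fin: "finite {xs\<in>cube n. P xs}" for P by (simp add: finite_cube)
  have seteq: "{xs\<in>cube n. t \<le> \<bar>f xs - prod_mean n f\<bar>} =
        {xs\<in>cube n. t \<le> f xs - prod_mean n f} \<union> {xs\<in>cube n. t \<le> - f xs - prod_mean n (\<lambda>xs. - f xs)}"
  proof -
    have "t \<le> \<bar>f xs - prod_mean n f\<bar> \<longleftrightarrow> t \<le> f xs - prod_mean n f \<or> t \<le> - f xs - prod_mean n (\<lambda>xs. - f xs)" for xs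
      unfolding pm_uminus by linarith
    then show ?thesis by blast
  qed
  have "(\<Sum>xs\<in>{xs\<in>cube n. t \<le> \<bar>f xs - prod_mean n f\<bar>}. (1/2::real)^n)
     \<le> (\<Sum>xs\<in>{xs\<in>cube n. t \<le> f xs - prod_mean n f}. (1/2::real)^n)
      + (\<Sum>xs\<in>{xs\<in>cube n. t \<le> - f xs - prod_mean n (\<lambda>xs. - f xs)}. (1/2::real)^n)"
  proof -
    define U where "U = {xs\<in>cube n. t \<le> f xs - prod_mean n f}"
    define V where "V = {xs\<in>cube n. t \<le> - f xs - prod_mean n (\<lambda>xs. - f xs)}"
    define g where "g = (\<lambda>xs::nat list. (1/2::real)^n)"
    have "sum g (U \<union> V) + sum g (U \<inter> V) = sum g U + sum g V"
      by (rule sum.union_inter) (simp_all add: U_def V_def fin)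
    moreover have "sum g (U \<inter> V) \<ge> 0" unfolding g_def by (intro sum_nonneg) simp
    ultimately have "sum g (U \<union> V) \<le> sum g U + sum g V" by linarith
    then show ?thesis unfolding seteq U_def V_def g_def .
  qed
  also have "\<dots> \<le> exp (- 2 * t^2 / (real n * c^2)) + exp (- 2 * t^2 / (real n * c^2))"
    by (intro add_mono chernoff assms bm)
  finally show ?thesis by simp
qed

lemma holder_ind:
  fixes w a :: "'a \<Rightarrow> real" and alpha beta :: real
  assumes fin: "finite C" and EC: "E \<subseteq> C" and w0: "\<And>x. x \<in> C \<Longrightarrow> w x \<ge> 0"
    and a0: "\<And>x. x \<in> C \<Longrightarrow> a x \<ge> 0" and al: "alpha > 1" and be: "beta = alpha/(alpha-1)"
  shows "(\<Sum>x\<in>E. w x * a x) \<le> (\<Sum>x\<in>C. w x * a x powr alpha) powr (1/alpha) * (\<Sum>x\<in>E. w x) powr (1/beta)"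
proof -
  define A where "A = (\<Sum>x\<in>C. w x * a x powr alpha)"
  define B where "B = (\<Sum>x\<in>E. w x)"
  have finE: "finite E" using fin EC finite_subset by blast
  have A0: "A \<ge> 0" unfolding A_def using w0 by (intro sum_nonneg) auto
  have B0: "B \<ge> 0" unfolding B_def using w0 EC by (intro sum_nonneg) auto
  have b1: "beta > 1" unfolding be using al by (simp add: less_divide_eq)
  have ab: "1/alpha + 1/beta = 1" unfolding be using al by (simp add: field_simps)
  show ?thesis
  proof (cases "A = 0 \<or> B = 0")
    case True
    have "\<forall>x\<in>E. w x * a x = 0"
    proof
      fix x assume xE: "x \<in> E"
      then have xC: "x \<in> C" using EC by auto
      show "w x * a x = 0"
      proof (cases "A = 0")
        case True
        then have "\<forall>x\<in>C. w x * a x powr alpha = 0"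
          unfolding A_def using fin w0 by (subst sum_nonneg_eq_0_iff[symmetric]) auto
        then have "w x * a x powr alpha = 0" using xC by auto
        then show ?thesis by auto
      next
        case False
        then have "B = 0" using True by auto
        then have "\<forall>x\<in>E. w x = 0"
          unfolding B_def using finE w0 EC by (subst sum_nonneg_eq_0_iff[symmetric]) auto
        then show ?thesis using xE by auto
      qed
    qed
    then have "(\<Sum>x\<in>E. w x * a x) = 0" by (intro sum.neutral) auto
    then show ?thesis by simp
  next
    case False
    then have Ap: "A > 0" and Bp: "B > 0" using A0 B0 by auto
    define P where "P = A powr (1/alpha)"
    define Q where "Q = B powr (1/beta)"
    have Pp: "P > 0" and Qp: "Q > 0" using Ap Bp by (auto simp: P_def Q_def)
    have PA: "P powr alpha = A" unfolding P_def using Ap al by (simp add: powr_powr)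
    have QB: "Q powr beta = B" unfolding Q_def using Bp b1 by (simp add: powr_powr)
    have pt: "w x * a x \<le> P * Q * (w x * a x powr alpha / (A * alpha) + w x / (B * beta))"
      if xE: "x \<in> E" for x
    proof -
      have xC: "x \<in> C" using xE EC by auto
      have "(a x / P) * (1 / Q) \<le> (a x / P) powr alpha / alpha + (1/Q) powr beta / beta"
        using Youngs_inequality[of alpha beta "a x / P" "1/Q"] al b1 ab a0[OF xC] Pp Qp by auto
      also have "\<dots> = a x powr alpha / (A * alpha) + 1 / (B * beta)"
        using a0[OF xC] Pp Qp by (simp add: powr_divide PA QB)
      finally have "a x / (P * Q) \<le> a x powr alpha / (A * alpha) + 1 / (B * beta)" by simp
      then have "a x \<le> P * Q * (a x powr alpha / (A * alpha) + 1 / (B * beta))"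
        using Pp Qp by (simp add: divide_le_eq mult.commute)
      then have "w x * a x \<le> w x * (P * Q * (a x powr alpha / (A * alpha) + 1 / (B * beta)))"
        using w0[OF xC] by (rule mult_left_mono)
      then show ?thesis by (simp add: field_simps)
    qed
    have "(\<Sum>x\<in>E. w x * a x) \<le> (\<Sum>x\<in>E. P * Q * (w x * a x powr alpha / (A * alpha) + w x / (B * beta)))"
      by (rule sum_mono) (rule pt)
    also have "\<dots> = P * Q * ((\<Sum>x\<in>E. w x * a x powr alpha) / (A * alpha) + B / (B * beta))"
      by (simp add: sum_distrib_left[symmetric] sum.distrib sum_divide_distrib B_def)
    also have "\<dots> \<le> P * Q * (A / (A * alpha) + B / (B * beta))"
    proof -
      have "(\<Sum>x\<in>E. w x * a x powr alpha) \<le> A"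
        unfolding A_def using fin EC w0 by (intro sum_mono2) auto
      then show ?thesis using Pp Qp Ap al
        by (intro mult_left_mono add_right_mono divide_right_mono) auto
    qed
    also have "\<dots> = P * Q" using Ap Bp ab by simp
    finally show ?thesis by (simp add: P_def Q_def A_def B_def)
  qed
qed

definition Tp :: "real \<Rightarrow> nat list \<Rightarrow> real" where
  "Tp lam xs = (\<Prod>i<length xs - 1. Kmat lam (xs ! i) (xs ! Suc i))"

lemma Tp_single: "Tp lam [x] = 1" by (simp add: Tp_def)

lemma Tp_cons2: "Tp lam (x#y#xs) = Kmat lam x y * Tp lam (y#xs)"
  unfolding Tp_def by (simp add: prod.lessThan_Suc_shift del: prod.lessThan_Suc)

lemma Kmat_nonneg: "0 \<le> lam \<Longrightarrow> lam \<le> 1 \<Longrightarrow> Kmat lam a b \<ge> 0"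
  by (simp add: Kmat_def)

lemma Tp_nonneg: "0 \<le> lam \<Longrightarrow> lam \<le> 1 \<Longrightarrow> Tp lam xs \<ge> 0"
  unfolding Tp_def by (intro prod_nonneg) (auto simp: Kmat_nonneg)

lemma Kmat_sum: "x \<in> {0,1} \<Longrightarrow> Kmat lam x 0 powr al + Kmat lam x 1 powr al = (1-lam) powr al + lam powr al"
  by (auto simp: Kmat_def)

lemma Tp_sum:
  assumes "0 \<le> lam" "lam \<le> 1" "x \<in> {0,1}"
  shows "(\<Sum>xs\<in>cube m. Tp lam (x#xs) powr al) = ((1-lam) powr al + lam powr al) ^ m"
  using assms(3)
proof (induction m arbitrary: x)
  case 0 then show ?case by (simp add: cube_0 Tp_single)
next
  case (Suc m)
  have "(\<Sum>xs\<in>cube (Suc m). Tp lam (x#xs) powr al)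
     = (\<Sum>ys\<in>cube m. Kmat lam x 0 powr al * Tp lam (0#ys) powr al + Kmat lam x 1 powr al * Tp lam (1#ys) powr al)"
    unfolding sum_cube_Suc Tp_cons2
    by (intro sum.cong refl) (simp add: powr_mult Kmat_nonneg Tp_nonneg assms)
  also have "\<dots> = Kmat lam x 0 powr al * (\<Sum>ys\<in>cube m. Tp lam (0#ys) powr al)
       + Kmat lam x 1 powr al * (\<Sum>ys\<in>cube m. Tp lam (1#ys) powr al)"
    by (simp add: sum.distrib sum_distrib_left)
  also have "\<dots> = ((1-lam) powr al + lam powr al) ^ Suc m"
    using Suc.IH[of 0] Suc.IH[of 1] Kmat_sum[OF Suc.prems, of lam al]
    by (simp add: distrib_right[symmetric])
  finally show ?case .
qed

lemma Tp_sum_all: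
  assumes "0 \<le> lam" "lam \<le> 1"
  shows "(\<Sum>xs\<in>cube (Suc m). Tp lam xs powr al) = 2 * ((1-lam) powr al + lam powr al) ^ m"
  unfolding sum_cube_Suc using Tp_sum[OF assms, where x=0 and m=m and al=al] Tp_sum[OF assms, where x=1 and m=m and al=al]
  by (simp add: sum.distrib)

theorem corollary2:
  fixes n :: nat and lam alpha t :: real and f :: "nat list \<Rightarrow> real"
  assumes "n > 1"
    and "0 < lam" and "lam < 1"
    and "\<And>xs i y. xs \<in> cube n \<Longrightarrow> i < n \<Longrightarrow> y \<in> {0,1} \<Longrightarrow>
           \<bar>f xs - f (xs[i := y])\<bar> \<le> 1 / real n"
    and "alpha > 1" and "t > 0"
  shows "let beta = alpha / (alpha - 1) in
    chain_prob lam n (\<lambda>xs. \<bar>f xs - prod_mean n f\<bar> \<ge> t)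
    \<le> 2 powr (1 / beta) *
       exp (- 2 * real n * t^2 / beta
            + (real n - 1) / beta * ln (2 * ((1 - lam) powr alpha + lam powr alpha) powr (1 / (alpha - 1))))"
proof -
  define beta where "beta = alpha / (alpha - 1)"
  obtain m where nm: "n = Suc m" using assms(1) by (cases n) auto
  have m1: "m \<ge> 1" using assms(1) nm by simp
  define S where "S = (1 - lam) powr alpha + lam powr alpha"
  have Sp: "S > 0" unfolding S_def using assms(2) by (intro add_nonneg_pos) auto
  define E where "E = {xs\<in>cube n. t \<le> \<bar>f xs - prod_mean n f\<bar>}"
  define a where "a = (\<lambda>xs. (2::real)^m * Tp lam xs)"
  have b1: "beta > 1" unfolding beta_def using assms(5) by (simp add: less_divide_eq)
  have lam01: "0 \<le> lam" "lam \<le> 1" using assms(2,3) by auto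
  have "chain_prob lam n (\<lambda>xs. \<bar>f xs - prod_mean n f\<bar> \<ge> t) = (\<Sum>xs\<in>E. (1/2)^n * a xs)"
    unfolding chain_prob_def E_def
  proof (intro sum.cong refl)
    fix xs assume "xs \<in> {xs \<in> cube n. t \<le> \<bar>f xs - prod_mean n f\<bar>}"
    then have "length xs = n" by (simp add: cube_def)
    then show "chain_pmf lam xs = (1/2)^n * a xs"
      unfolding chain_pmf_def a_def Tp_def nm by (simp add: power_divide)
  qed
  also have "\<dots> \<le> (\<Sum>xs\<in>cube n. (1/2)^n * a xs powr alpha) powr (1/alpha) * (\<Sum>xs\<in>E. (1/2::real)^n) powr (1/beta)"
    by (rule holder_ind) (auto simp: finite_cube E_def a_def Tp_nonneg lam01 assms(5) beta_def)
  also have "\<dots> \<le> exp ((real n - 1) / beta * ln (2 * S powr (1 / (alpha - 1)))) * (2 powr (1 / beta) * exp (- 2 * real n * t^2 / beta))"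
  proof (rule mult_mono)
    have "(\<Sum>xs\<in>cube n. (1/2)^n * a xs powr alpha) = (1/2)^n * (2^m) powr alpha * (2 * S^m)"
    proof -
      have "(\<Sum>xs\<in>cube n. (1/2)^n * a xs powr alpha) = (\<Sum>xs\<in>cube n. ((1/2)^n * (2^m) powr alpha) * Tp lam xs powr alpha)"
        unfolding a_def by (intro sum.cong refl) (simp add: powr_mult Tp_nonneg lam01)
      also have "\<dots> = ((1/2)^n * (2^m) powr alpha) * (\<Sum>xs\<in>cube n. Tp lam xs powr alpha)"
        by (simp add: sum_distrib_left)
      also have "\<dots> = (1/2)^n * (2^m) powr alpha * (2 * S^m)"
        unfolding nm Tp_sum_all[OF lam01] S_def ..
      finally show ?thesis .
    qed
    also have "\<dots> = exp (real m * (alpha - 1) * ln 2 + real m * ln S)"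
    proof -
      have "(1/2::real)^n = exp (- real n * ln 2)"
        by (simp add: exp_minus exp_of_nat_mult power_one_over inverse_eq_divide)
      moreover have "((2::real)^m) powr alpha = exp (alpha * real m * ln 2)"
        by (simp add: powr_def ln_realpow)
      moreover have "S^m = exp (real m * ln S)" using Sp by (simp add: exp_of_nat_mult)
      moreover have "(2::real) = exp (ln 2)" by simp
      ultimately have "(1/2)^n * (2^m) powr alpha * (2 * S^m)
          = exp (- real n * ln 2) * exp (alpha * real m * ln 2) * (exp (ln 2) * exp (real m * ln S))"
        by simp
      also have "\<dots> = exp (- real n * ln 2 + alpha * real m * ln 2 + ln 2 + real m * ln S)"
        by (simp only: exp_add mult.assoc)
      also have "- real n * ln 2 + alpha * real m * ln 2 + ln 2 + real m * ln S
          = real m * (alpha - 1) * ln 2 + real m * ln S"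
        by (simp add: nm algebra_simps)
      finally show ?thesis .
    qed
    finally have Aeq: "(\<Sum>xs\<in>cube n. (1/2)^n * a xs powr alpha) = exp (real m * (alpha - 1) * ln 2 + real m * ln S)" .
    have "ln (2 * S powr (1 / (alpha - 1))) = ln 2 + ln S / (alpha - 1)"
      using Sp by (simp add: ln_mult ln_powr)
    moreover have "(real n - 1) / beta * (ln 2 + ln S / (alpha - 1))
        = 1/alpha * (real m * (alpha - 1) * ln 2 + real m * ln S)"
      using assms(5) by (simp add: nm beta_def field_simps)
    ultimately have "(real n - 1) / beta * ln (2 * S powr (1 / (alpha - 1)))
        = 1/alpha * (real m * (alpha - 1) * ln 2 + real m * ln S)" by simp
    then show "(\<Sum>xs\<in>cube n. (1/2)^n * a xs powr alpha) powr (1/alpha)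
        \<le> exp ((real n - 1) / beta * ln (2 * S powr (1 / (alpha - 1))))"
      unfolding Aeq by (simp add: powr_def)
  next
    have bd: "bd n (1 / real n) f" unfolding bd_def using assms(4) by blast
    have "(\<Sum>xs\<in>E. (1/2::real)^n) \<le> 2 * exp (- 2 * t^2 / (real n * (1 / real n)^2))"
      unfolding E_def by (rule two_sided[OF bd]) (use assms nm in auto)
    also have "- 2 * t^2 / (real n * (1 / real n)^2) = - 2 * real n * t^2"
      using nm by (simp add: power2_eq_square field_simps)
    finally have Bb: "(\<Sum>xs\<in>E. (1/2::real)^n) \<le> 2 * exp (- 2 * real n * t^2)" .
    have "(\<Sum>xs\<in>E. (1/2::real)^n) powr (1/beta) \<le> (2 * exp (- 2 * real n * t^2)) powr (1/beta)"
      using Bb b1 by (intro powr_mono2) (auto intro: sum_nonneg)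
    also have "\<dots> = 2 powr (1 / beta) * exp (- 2 * real n * t^2 / beta)"
      by (simp add: powr_mult powr_def ln_mult exp_add[symmetric] diff_divide_distrib)
    finally show "(\<Sum>xs\<in>E. (1/2::real)^n) powr (1/beta) \<le> 2 powr (1 / beta) * exp (- 2 * real n * t^2 / beta)" .
  qed auto
  also have "\<dots> = 2 powr (1 / beta) *
       exp (- 2 * real n * t^2 / beta + (real n - 1) / beta * ln (2 * S powr (1 / (alpha - 1))))"
    unfolding exp_add by (simp only: mult_ac)
  finally show ?thesis unfolding Let_def beta_def S_def E_def .
qed

end
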